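(* Let $w=w_1\cdots w_n$ be a word of length $n\ge 2$ such that $w_i=w_{n-i+1}$ for all $1\le i\le n$, and let $k$ be the maximum number of times any single letter appears in $w$. Then $f(w)=\max\{n,2k\}+2$.
   Context: A word of length $n$ is a sequence $w=w_1w_2\cdots w_n$ of letters (symbols). Let $[n]=\{1,\dots,n\}$. An $n$-grid is a function $G:[n]^2\to\Sigma$, where $\Sigma$ is an arbitrary set of letters. The $i$th row of $G$ contains $w$ if $G(i,j)=w_j$ for all $1\le j\le n$, or $G(i,j)=w_{n-j+1}$ for all $1\le j\le n$. The $j$th column contains $w$ if $G(i,j)=w_i$ for all $i$, or $G(i,j)=w_{n-i+1}$ for all $i$. The main diagonal contains $w$ if $G(i,i)=w_i$ for all $i$ or $G(i,i)=w_{n-i+1}$ for all $i$; the anti-diagonal contains $w$ if $G(i,n-i+1)=w_i$ for all $i$ or $G(i,n-i+1)=w_{n-i+1}$ for all $i$. Let $f(w,G)$ be the number of the $2n+2$ lines ($n$ rows, $n$ columns, $2$ diagonals) of $G$ that contain $w$, and $f(w)=\max_G f(w,G)$ over all $n$-grids $G$. *)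

theory Defs
  imports Main
begin

text \<open>A word w = w_1 ... w_n is a list of length n, with w_i = w ! (i - 1).
  An n-grid is a function G :: nat => nat => 'a; only its values on [n]^2 matter.\<close>

definition row_contains :: "'a list \<Rightarrow> (nat \<Rightarrow> nat \<Rightarrow> 'a) \<Rightarrow> nat \<Rightarrow> bool" where
  "row_contains w G i \<longleftrightarrow>
     (\<forall>j\<in>{1..length w}. G i j = w ! (j - 1)) \<or>
     (\<forall>j\<in>{1..length w}. G i j = w ! (length w - j))"

definition col_contains :: "'a list \<Rightarrow> (nat \<Rightarrow> nat \<Rightarrow> 'a) \<Rightarrow> nat \<Rightarrow> bool" where
  "col_contains w G j \<longleftrightarrow>
     (\<forall>i\<in>{1..length w}. G i j = w ! (i - 1)) \<or>
     (\<forall>i\<in>{1..length w}. G i j = w ! (length w - i))"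

definition diag_contains :: "'a list \<Rightarrow> (nat \<Rightarrow> nat \<Rightarrow> 'a) \<Rightarrow> bool" where
  "diag_contains w G \<longleftrightarrow>
     (\<forall>i\<in>{1..length w}. G i i = w ! (i - 1)) \<or>
     (\<forall>i\<in>{1..length w}. G i i = w ! (length w - i))"

definition antidiag_contains :: "'a list \<Rightarrow> (nat \<Rightarrow> nat \<Rightarrow> 'a) \<Rightarrow> bool" where
  "antidiag_contains w G \<longleftrightarrow>
     (\<forall>i\<in>{1..length w}. G i (length w - i + 1) = w ! (i - 1)) \<or>
     (\<forall>i\<in>{1..length w}. G i (length w - i + 1) = w ! (length w - i))"

definition lines_containing :: "'a list \<Rightarrow> (nat \<Rightarrow> nat \<Rightarrow> 'a) \<Rightarrow> nat" where
  "lines_containing w G =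
     card {i\<in>{1..length w}. row_contains w G i}
   + card {j\<in>{1..length w}. col_contains w G j}
   + (if diag_contains w G then 1 else 0)
   + (if antidiag_contains w G then 1 else 0)"

text \<open>f(w) = max over all grids (letters from the type 'a, which contains all letters of w).\<close>
definition fmax :: "'a list \<Rightarrow> nat" where
  "fmax w = Max (range (lines_containing w))"

end

theory Submission
  imports Defs
begin

lemma count_card:
  "card {i\<in>{1..length w}. w!(i-1) = a} = count_list w a"
proof -
  have "{i\<in>{1..length w}. w!(i-1) = a} = Suc ` {i. i < length w \<and> a = w!i}"
  proof (rule set_eqI, rule iffI)
    fix x assume x: "x \<in> {i\<in>{1..length w}. w!(i-1) = a}"
    then have "x = Suc (x - 1)" "x - 1 < length w" "a = w!(x-1)" by auto
    then show "x \<in> Suc ` {i. i < length w \<and> a = w!i}" by blast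
  next
    fix x assume "x \<in> Suc ` {i. i < length w \<and> a = w!i}"
    then show "x \<in> {i\<in>{1..length w}. w!(i-1) = a}" by auto
  qed
  then have "card {i\<in>{1..length w}. w!(i-1) = a} = card {i. i < length w \<and> a = w!i}"
    by (simp add: card_image)
  also have "\<dots> = count_list w a"
    by (simp add: count_list_eq_length_filter length_filter_conv_card)
  finally show ?thesis .
qed

lemma row_iff:
  assumes "\<forall>i\<in>{1..length w}. w ! (i - 1) = w ! (length w - i)"
  shows "row_contains w G i \<longleftrightarrow> (\<forall>j\<in>{1..length w}. G i j = w ! (j - 1))"
  using assms unfolding row_contains_def by auto

lemma col_iff:
  assumes "\<forall>i\<in>{1..length w}. w ! (i - 1) = w ! (length w - i)"
  shows "col_contains w G j \<longleftrightarrow> (\<forall>i\<in>{1..length w}. G i j = w ! (i - 1))"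
  using assms unfolding col_contains_def by auto

lemma upper:
  assumes pal: "\<forall>i\<in>{1..length w}. w ! (i - 1) = w ! (length w - i)"
    and K: "\<forall>a. count_list w a \<le> K"
  shows "lines_containing w G \<le> max (length w) (2 * K) + 2"
proof -
  define n where "n = length w"
  define R where "R = {i\<in>{1..n}. row_contains w G i}"
  define C where "C = {j\<in>{1..n}. col_contains w G j}"
  have fR: "finite R" "finite C" unfolding R_def C_def by auto
  have RC: "card R + card C \<le> max n (2*K)"
  proof (cases "R = {} \<or> C = {}")
    case True
    have "card R \<le> n" "card C \<le> n" unfolding R_def C_def
      by (metis (no_types, lifting) card_atLeastAtMost card_mono diff_Suc_1 finite_atLeastAtMost mem_Collect_eq subsetI)+
    then show ?thesis using True by auto
  next
    case False
    then obtain i0 j0 where i0: "i0 \<in> R" and j0: "j0 \<in> C" by auto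
    define a where "a = w!(j0-1)"
    have rowR: "\<And>i j. i \<in> R \<Longrightarrow> j \<in> {1..n} \<Longrightarrow> G i j = w!(j-1)"
      using row_iff[OF pal] unfolding R_def n_def by auto
    have colC: "\<And>i j. j \<in> C \<Longrightarrow> i \<in> {1..n} \<Longrightarrow> G i j = w!(i-1)"
      using col_iff[OF pal] unfolding C_def n_def by auto
    have RS: "R \<subseteq> {i\<in>{1..n}. w!(i-1) = a}"
    proof
      fix i assume "i \<in> R"
      then have "i \<in> {1..n}" unfolding R_def by auto
      moreover have "j0 \<in> {1..n}" using j0 unfolding C_def by auto
      ultimately show "i \<in> {i\<in>{1..n}. w!(i-1) = a}"
        using rowR[OF \<open>i \<in> R\<close>] colC[OF j0] a_def by force
    qed
    have i0n: "i0 \<in> {1..n}" using i0 unfolding R_def by auto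
    have a2: "w!(i0-1) = a"
      using RS i0 by auto
    have CS: "C \<subseteq> {i\<in>{1..n}. w!(i-1) = a}"
    proof
      fix j assume "j \<in> C"
      then have "j \<in> {1..n}" unfolding C_def by auto
      then show "j \<in> {i\<in>{1..n}. w!(i-1) = a}"
        using rowR[OF i0] colC[OF \<open>j \<in> C\<close>] i0n a2 by force
    qed
    have "card R \<le> count_list w a" "card C \<le> count_list w a"
      using card_mono[OF _ RS] card_mono[OF _ CS] count_card[of w a] unfolding n_def by auto
    then show ?thesis using K[rule_format, of a] by auto
  qed
  then show ?thesis unfolding lines_containing_def R_def C_def n_def by auto
qed

lemma lower:
  assumes pal: "\<forall>i\<in>{1..length w}. w ! (i - 1) = w ! (length w - i)"
  shows "\<exists>G. lines_containing w G \<ge> 2 * count_list w a + 2"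
proof -
  define n where "n = length w"
  define G where "G = (\<lambda>i j. if w!(i-1) = a then w!(j-1) else w!(i-1))"
  have S: "{i\<in>{1..n}. w!(i-1) = a} \<subseteq> {i\<in>{1..n}. row_contains w G i}"
    using row_iff[OF pal] unfolding G_def n_def by auto
  have S2: "{i\<in>{1..n}. w!(i-1) = a} \<subseteq> {j\<in>{1..n}. col_contains w G j}"
    using col_iff[OF pal] unfolding G_def n_def by auto
  have d: "diag_contains w G" unfolding diag_contains_def G_def by auto
  have ad: "antidiag_contains w G" unfolding antidiag_contains_def G_def
  proof (rule disjI1, intro ballI)
    fix i assume i: "i \<in> {1..length w}"
    have "w ! (length w - i + 1 - 1) = w!(i-1)"
      using pal[rule_format, of i] i by auto
    then show "(if w ! (i - 1) = a then w ! (length w - i + 1 - 1) else w ! (i - 1)) = w ! (i - 1)"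
      by auto
  qed
  have "card {i\<in>{1..n}. w!(i-1) = a} \<le> card {i\<in>{1..n}. row_contains w G i}"
       "card {i\<in>{1..n}. w!(i-1) = a} \<le> card {j\<in>{1..n}. col_contains w G j}"
    using card_mono[OF _ S] card_mono[OF _ S2] by auto
  then show ?thesis using count_card[of w a] d ad
    unfolding lines_containing_def n_def by (intro exI[of _ G]) auto
qed

lemma lower_n:
  assumes pal: "\<forall>i\<in>{1..length w}. w ! (i - 1) = w ! (length w - i)"
  shows "\<exists>G. lines_containing w G \<ge> length w + 2"
proof -
  define G where "G = (\<lambda>(i::nat) j. w!(j-1))"
  have S: "{i\<in>{1..length w}. row_contains w G i} = {1..length w}"
    using row_iff[OF pal] unfolding G_def by auto
  have d: "diag_contains w G" unfolding diag_contains_def G_def by auto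
  have ad: "antidiag_contains w G" unfolding antidiag_contains_def G_def
    using pal by auto
  show ?thesis using S d ad unfolding lines_containing_def by (intro exI[of _ G]) auto
qed

theorem theorem2:
  fixes w :: "'a list"
  assumes "length w \<ge> 2"
    and "\<forall>i\<in>{1..length w}. w ! (i - 1) = w ! (length w - i)"
  shows "fmax w = max (length w) (2 * Max ((\<lambda>a. count_list w a) ` set w)) + 2"
proof -
  define K where "K = Max ((\<lambda>a. count_list w a) ` set w)"
  have ne: "set w \<noteq> {}" using assms(1) by auto
  have K: "\<forall>a. count_list w a \<le> K"
  proof
    fix a show "count_list w a \<le> K"
    proof (cases "a \<in> set w")
      case True then show ?thesis unfolding K_def by (intro Max_ge) auto
    next
      case False then show ?thesis by simp
    qed
  qed
  have "K \<in> (\<lambda>a. count_list w a) ` set w"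
    unfolding K_def using ne by (intro Max_in) auto
  then obtain a where "a \<in> set w" "count_list w a = K" by auto
  obtain G1 where G1: "lines_containing w G1 \<ge> 2 * K + 2"
    using lower[OF assms(2), of a] \<open>count_list w a = K\<close> by auto
  obtain G2 where G2: "lines_containing w G2 \<ge> length w + 2"
    using lower_n[OF assms(2)] by auto
  have up: "\<And>G. lines_containing w G \<le> max (length w) (2 * K) + 2"
    using upper[OF assms(2) K] by auto
  have ex: "\<exists>G. lines_containing w G = max (length w) (2 * K) + 2"
  proof (cases "length w \<le> 2 * K")
    case True then show ?thesis using G1 up[of G1] by (intro exI[of _ G1]) auto
  next
    case False then show ?thesis using G2 up[of G2] by (intro exI[of _ G2]) auto
  qed
  have fin: "finite (range (lines_containing w))"
    by (rule finite_subset[of _ "{0..max (length w) (2 * K) + 2}"]) (use up in auto)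
  have "Max (range (lines_containing w)) = max (length w) (2 * K) + 2"
  proof (rule Max_eqI[OF fin])
    show "\<And>y. y \<in> range (lines_containing w) \<Longrightarrow> y \<le> max (length w) (2 * K) + 2"
      using up by auto
    show "max (length w) (2 * K) + 2 \<in> range (lines_containing w)"
      using ex by (metis rangeI)
  qed
  then show ?thesis unfolding fmax_def K_def by simp
qed

end
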